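(* Let $X$ be a shift space and let $w\in\mathcal L(X)$. Let $U\subseteq\mathcal L(X)$ be a finite $X$-maximal suffix code and $V\subseteq\mathcal L(X)$ a finite $X$-maximal prefix code. Let $\ell\in\mathcal L(X)$ with $\ell w\in\mathcal L(X)$ be such that $A\ell\cap\mathcal L(X)\subseteq U$ and such that $\mathcal E_{A,V}(\ell w)$ is a tree. Set $U'=(U\setminus A\ell)\cup\{\ell\}$. Then $\mathcal E_{U',V}(w)$ is a tree if and only if $\mathcal E_{U,V}(w)$ is a tree.
   Context: $A$ is a finite alphabet; a shift space is a closed shift-invariant subset $X\subseteq A^{\mathbb Z}$; $\mathcal L(X)$ is its set of finite factors. A prefix code (resp. suffix code) is a set of words none of which is a proper prefix (resp. proper suffix) of another; a prefix (resp. suffix) code $U\subseteq\mathcal L(X)$ is $X$-maximal if it is not properly contained in a prefix (resp. suffix) code contained in $\mathcal L(X)$. For $U,V\subseteq A^*$ and $w\in\mathcal L(X)$, let $L_U(w)=\{u\in U: uw\in\mathcal L(X)\}$ and $R_V(w)=\{v\in V: wv\in\mathcal L(X)\}$; the generalized extension graph $\mathcal E_{U,V}(w)$ is the undirected bipartite graph whose vertex set is the disjoint union of $L_U(w)$ and $R_V(w)$, with an edge between $u\in L_U(w)$ and $v\in R_V(w)$ iff $uwv\in\mathcal L(X)$. (Here $A$ denotes the set of one-letter words.) *)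

theory Defs
  imports Main "HOL-Library.Sublist"
begin

text \<open>The alphabet A is the finite type 'a (A = UNIV). Bi-infinite sequences are int => 'a.\<close>

definition shift :: "(int \<Rightarrow> 'a) \<Rightarrow> (int \<Rightarrow> 'a)" where
  "shift x = (\<lambda>i. x (i + 1))"

text \<open>Closedness in the product topology of the discrete alphabet: a point belongs to X
  iff every central window of it agrees with some point of X.\<close>
definition closed_seqs :: "(int \<Rightarrow> 'a) set \<Rightarrow> bool" where
  "closed_seqs X \<longleftrightarrow>
     (\<forall>x. (\<forall>n::nat. \<exists>y\<in>X. \<forall>i::int. \<bar>i\<bar> \<le> int n \<longrightarrow> y i = x i) \<longrightarrow> x \<in> X)"

definition shift_space :: "(int \<Rightarrow> 'a::finite) set \<Rightarrow> bool" where
  "shift_space X \<longleftrightarrow> closed_seqs X \<and> shift ` X = X"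

definition lang :: "(int \<Rightarrow> 'a) set \<Rightarrow> 'a list set" where
  "lang X = {w. \<exists>x\<in>X. \<exists>i::int. \<forall>j<length w. w ! j = x (i + int j)}"

definition prefix_code :: "'a list set \<Rightarrow> bool" where
  "prefix_code U \<longleftrightarrow> (\<forall>u\<in>U. \<forall>v\<in>U. prefix u v \<longrightarrow> u = v)"

definition suffix_code :: "'a list set \<Rightarrow> bool" where
  "suffix_code U \<longleftrightarrow> (\<forall>u\<in>U. \<forall>v\<in>U. suffix u v \<longrightarrow> u = v)"

definition X_max_prefix_code :: "(int \<Rightarrow> 'a) set \<Rightarrow> 'a list set \<Rightarrow> bool" where
  "X_max_prefix_code X U \<longleftrightarrow> U \<subseteq> lang X \<and> prefix_code U \<and>
     (\<forall>U'. U \<subseteq> U' \<and> U' \<subseteq> lang X \<and> prefix_code U' \<longrightarrow> U' = U)"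

definition X_max_suffix_code :: "(int \<Rightarrow> 'a) set \<Rightarrow> 'a list set \<Rightarrow> bool" where
  "X_max_suffix_code X U \<longleftrightarrow> U \<subseteq> lang X \<and> suffix_code U \<and>
     (\<forall>U'. U \<subseteq> U' \<and> U' \<subseteq> lang X \<and> suffix_code U' \<longrightarrow> U' = U)"

definition letters :: "'a list set" where
  "letters = {[a] | a. True}"

definition L_set :: "(int \<Rightarrow> 'a) set \<Rightarrow> 'a list set \<Rightarrow> 'a list \<Rightarrow> 'a list set" where
  "L_set X U w = {u \<in> U. u @ w \<in> lang X}"

definition R_set :: "(int \<Rightarrow> 'a) set \<Rightarrow> 'a list set \<Rightarrow> 'a list \<Rightarrow> 'a list set" where
  "R_set X V w = {v \<in> V. w @ v \<in> lang X}"

text \<open>Generalized extension graph: vertices are the disjoint union (Inl for left, Inr for right).\<close>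
definition ext_vertices :: "(int \<Rightarrow> 'a) set \<Rightarrow> 'a list set \<Rightarrow> 'a list set \<Rightarrow> 'a list
    \<Rightarrow> ('a list + 'a list) set" where
  "ext_vertices X U V w = Inl ` L_set X U w \<union> Inr ` R_set X V w"

fun ext_edge :: "(int \<Rightarrow> 'a) set \<Rightarrow> 'a list set \<Rightarrow> 'a list set \<Rightarrow> 'a list
    \<Rightarrow> ('a list + 'a list) \<Rightarrow> ('a list + 'a list) \<Rightarrow> bool" where
  "ext_edge X U V w (Inl u) (Inr v) =
     (u \<in> L_set X U w \<and> v \<in> R_set X V w \<and> u @ w @ v \<in> lang X)"
| "ext_edge X U V w (Inr v) (Inl u) =
     (u \<in> L_set X U w \<and> v \<in> R_set X V w \<and> u @ w @ v \<in> lang X)"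
| "ext_edge X U V w _ _ = False"

definition graph_connected :: "'v set \<Rightarrow> ('v \<Rightarrow> 'v \<Rightarrow> bool) \<Rightarrow> bool" where
  "graph_connected Vs E \<longleftrightarrow>
     (\<forall>x\<in>Vs. \<forall>y\<in>Vs. (\<lambda>a b. a \<in> Vs \<and> b \<in> Vs \<and> E a b)\<^sup>*\<^sup>* x y)"

definition graph_has_cycle :: "'v set \<Rightarrow> ('v \<Rightarrow> 'v \<Rightarrow> bool) \<Rightarrow> bool" where
  "graph_has_cycle Vs E \<longleftrightarrow>
     (\<exists>cs. length cs \<ge> 3 \<and> distinct cs \<and> set cs \<subseteq> Vs \<and>
        (\<forall>i < length cs. E (cs ! i) (cs ! ((i + 1) mod length cs))))"

definition is_tree :: "'v set \<Rightarrow> ('v \<Rightarrow> 'v \<Rightarrow> bool) \<Rightarrow> bool" where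
  "is_tree Vs E \<longleftrightarrow> Vs \<noteq> {} \<and> graph_connected Vs E \<and> \<not> graph_has_cycle Vs E"

definition ext_graph_is_tree :: "(int \<Rightarrow> 'a) set \<Rightarrow> 'a list set \<Rightarrow> 'a list set \<Rightarrow> 'a list \<Rightarrow> bool" where
  "ext_graph_is_tree X U V w = is_tree (ext_vertices X U V w) (ext_edge X U V w)"

end

theory Submission
  imports Defs
begin


definition rem :: "('v \<Rightarrow> 'v \<Rightarrow> bool) \<Rightarrow> 'v \<Rightarrow> 'v \<Rightarrow> 'v \<Rightarrow> 'v \<Rightarrow> bool" where
  "rem E x y a b \<longleftrightarrow> E a b \<and> \<not> (a = x \<and> b = y) \<and> \<not> (a = y \<and> b = x)"

lemma rem_swap: "rem E x y = rem E y x"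
  by (auto simp: rem_def fun_eq_iff)

lemma rtranclp_map:
  assumes "\<And>a b. R a b \<Longrightarrow> R' (f a) (f b)" and "R\<^sup>*\<^sup>* a b"
  shows "R'\<^sup>*\<^sup>* (f a) (f b)"
  using assms(2) by (induction rule: rtranclp_induct) (auto intro: rtranclp.rtrancl_into_rtrancl assms(1))

lemma rtranclp_rev:
  assumes "\<And>a b. R a b \<Longrightarrow> R b a" and "R\<^sup>*\<^sup>* a b"
  shows "R\<^sup>*\<^sup>* b a"
  using assms(2) by (induction rule: rtranclp_induct) (auto intro: converse_rtranclp_into_rtranclp assms(1))

lemma rem_sym: "(\<And>a b. E a b \<Longrightarrow> E b a) \<Longrightarrow> rem E x y a b \<Longrightarrow> rem E x y b a"
  by (auto simp: rem_def)

lemma rem_rev: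
  assumes "\<And>a b. E a b \<Longrightarrow> E b a" "(rem E x y)\<^sup>*\<^sup>* a b"
  shows "(rem E x y)\<^sup>*\<^sup>* b a"
  by (rule rtranclp_rev[OF _ assms(2)]) (use assms(1) in \<open>auto simp: rem_def\<close>)

lemma dpath:
  assumes "R\<^sup>*\<^sup>* a b"
  shows "\<exists>zs. zs \<noteq> [] \<and> hd zs = a \<and> last zs = b \<and> distinct zs \<and> successively R zs"
  using assms
proof (induction rule: rtranclp_induct)
  case base
  then show ?case by (intro exI[of _ "[a]"]) auto
next
  case (step b c)
  then obtain zs where zs: "zs \<noteq> []" "hd zs = a" "last zs = b" "distinct zs" "successively R zs" by blast
  show ?case
  proof (cases "c \<in> set zs")
    case True
    then obtain ys ts where eq: "zs = ys @ c # ts" by (meson split_list)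
    have "successively R (ys @ [c])"
      using zs(5) unfolding eq successively_append_iff by (auto simp: successively_Cons)
    moreover have "hd (ys @ [c]) = a" using zs(2) eq by (cases ys) auto
    ultimately show ?thesis using zs(4) eq by (intro exI[of _ "ys @ [c]"]) auto
  next
    case False
    have "successively R (zs @ [c])"
      using zs step(2) unfolding successively_append_iff by auto
    then show ?thesis using zs False by (intro exI[of _ "zs @ [c]"]) auto
  qed
qed

lemma cycle_iff:
  assumes sym: "\<And>a b. E a b \<Longrightarrow> E b a" and irr: "\<And>a. \<not> E a a"
    and win: "\<And>a b. E a b \<Longrightarrow> a \<in> Vs \<and> b \<in> Vs"
  shows "graph_has_cycle Vs E \<longleftrightarrow> (\<exists>x y. E x y \<and> (rem E x y)\<^sup>*\<^sup>* y x)"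
proof
  assume "graph_has_cycle Vs E"
  then obtain cs where cs: "length cs \<ge> 3" "distinct cs" "set cs \<subseteq> Vs"
    "\<forall>i < length cs. E (cs ! i) (cs ! ((i + 1) mod length cs))"
    unfolding graph_has_cycle_def by blast
  define k where "k = length cs"
  have k3: "k \<ge> 3" using cs k_def by simp
  have e: "E (cs ! i) (cs ! (i+1))" if "i + 1 < k" for i
    using cs(4)[rule_format, of i] that k_def by simp
  have d: "cs ! i = cs ! j \<longleftrightarrow> i = j" if "i < k" "j < k" for i j
    using nth_eq_iff_index_eq[OF cs(2)] that k_def by simp
  have r: "(rem E (cs!0) (cs!1))\<^sup>*\<^sup>* (cs!1) (cs!j)" if "1 \<le> j" "j < k" for j
    using that
  proof (induction j)
    case 0 then show ?case by simp
  next
    case (Suc j)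
    show ?case
    proof (cases "j = 0")
      case True then show ?thesis by simp
    next
      case False
      have "rem E (cs!0) (cs!1) (cs!j) (cs!Suc j)"
        unfolding rem_def using e[of j] Suc.prems d[of j 0] d[of "Suc j" 0] False
        by auto
      then show ?thesis using Suc False by (auto intro: rtranclp.rtrancl_into_rtrancl)
    qed
  qed
  have last: "E (cs ! (k-1)) (cs ! 0)"
  proof -
    have "Suc (k - 1) = k" using k3 by simp
    then show ?thesis using cs(4)[rule_format, of "k-1"] k3 k_def by simp
  qed
  have "rem E (cs!0) (cs!1) (cs ! (k-1)) (cs ! 0)"
    unfolding rem_def using last d[of "k-1" 0] d[of "k-1" 1] k3 by auto
  moreover have "(rem E (cs!0) (cs!1))\<^sup>*\<^sup>* (cs!1) (cs!(k-1))" using r[of "k-1"] k3 by simp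
  ultimately have "(rem E (cs!0) (cs!1))\<^sup>*\<^sup>* (cs!1) (cs!0)"
    by (meson rtranclp.rtrancl_into_rtrancl)
  moreover have "E (cs!0) (cs!1)" using e[of 0] k3 by simp
  ultimately show "\<exists>x y. E x y \<and> (rem E x y)\<^sup>*\<^sup>* y x" by blast
next
  assume "\<exists>x y. E x y \<and> (rem E x y)\<^sup>*\<^sup>* y x"
  then obtain x y where xy: "E x y" "(rem E x y)\<^sup>*\<^sup>* y x" by blast
  obtain zs where zs: "zs \<noteq> []" "hd zs = y" "last zs = x" "distinct zs" "successively (rem E x y) zs"
    using dpath[OF xy(2)] by blast
  have xny: "x \<noteq> y" using xy(1) irr by auto
  define k where "k = length zs"
  have k2: "k \<ge> 2"
  proof (rule ccontr)
    assume "\<not> k \<ge> 2"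
    then have "k = 1" using zs(1) k_def by (cases zs) (auto simp: not_le)
    then have "hd zs = last zs" using k_def by (cases zs) auto
    then show False using zs xny by simp
  qed
  have k3: "k \<ge> 3"
  proof (rule ccontr)
    assume "\<not> k \<ge> 3"
    then have "k = 2" using k2 by simp
    then obtain a b where "zs = [a, b]" using k_def
      by (cases zs; cases "tl zs") auto
    then show False using zs by (auto simp: rem_def)
  qed
  have e: "rem E x y (zs ! i) (zs ! Suc i)" if "Suc i < k" for i
    using successively_nth[OF zs(5)] that k_def by simp
  have h0: "zs ! 0 = y" using zs(1,2) by (simp add: hd_conv_nth)
  have hl: "zs ! (k - 1) = x" using zs(1,3) k_def by (simp add: last_conv_nth)
  have cyc: "\<forall>i < k. E (zs ! i) (zs ! ((i + 1) mod k))"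
  proof (intro allI impI)
    fix i assume i: "i < k"
    show "E (zs ! i) (zs ! ((i + 1) mod k))"
    proof (cases "Suc i < k")
      case True then show ?thesis using e[of i] by (simp add: rem_def)
    next
      case False
      then have "i = k - 1" using i by simp
      then show ?thesis using h0 hl xy(1) k3 by simp
    qed
  qed
  have sub: "set zs \<subseteq> Vs"
  proof
    fix z assume "z \<in> set zs"
    then obtain i where i: "i < k" "zs ! i = z" using k_def by (auto simp: in_set_conv_nth)
    show "z \<in> Vs" using cyc[rule_format, OF i(1)] win i(2) by blast
  qed
  show "graph_has_cycle Vs E"
    unfolding graph_has_cycle_def using k3 zs(4) sub cyc k_def by blast
qed

lemma first_step:
  assumes "R\<^sup>*\<^sup>* x y"
  shows "x \<noteq> y \<longrightarrow> (\<exists>z. R x z \<and> (rem R x z)\<^sup>*\<^sup>* z y)"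
  using assms
proof (induction rule: rtranclp_induct)
  case base then show ?case by simp
next
  case (step b c)
  show ?case
  proof
    assume xc: "x \<noteq> c"
    show "\<exists>z. R x z \<and> (rem R x z)\<^sup>*\<^sup>* z c"
    proof (cases "b = x")
      case True then show ?thesis using step(2) by blast
    next
      case False
      then obtain z where z: "R x z" "(rem R x z)\<^sup>*\<^sup>* z b" using step(3) by blast
      have "rem R x z b c" using step(2) False xc by (auto simp: rem_def)
      then show ?thesis using z by (blast intro: rtranclp.rtrancl_into_rtrancl)
    qed
  qed
qed

lemma first_hit:
  assumes "R\<^sup>*\<^sup>* a b" "a \<noteq> p"
  shows "((\<lambda>u v. R u v \<and> u \<noteq> p \<and> v \<noteq> p)\<^sup>*\<^sup>* a b \<and> b \<noteq> p) \<or>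
         (\<exists>m. (\<lambda>u v. R u v \<and> u \<noteq> p \<and> v \<noteq> p)\<^sup>*\<^sup>* a m \<and> R m p)"
  using assms(1)
proof (induction rule: rtranclp_induct)
  case base then show ?case using assms(2) by simp
next
  case (step b c)
  then show ?case by (cases "c = p") (auto intro: rtranclp.rtrancl_into_rtrancl)
qed




lemma conn_simp:
  assumes "\<And>a b. E a b \<Longrightarrow> a \<in> Vs \<and> b \<in> Vs"
  shows "graph_connected Vs E \<longleftrightarrow> (\<forall>x\<in>Vs. \<forall>y\<in>Vs. E\<^sup>*\<^sup>* x y)"
proof -
  have "(\<lambda>a b. a \<in> Vs \<and> b \<in> Vs \<and> E a b) = E" using assms by (auto simp: fun_eq_iff)
  then show ?thesis unfolding graph_connected_def by simp
qed

locale subst =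
  fixes V' V :: "'v set" and E' E :: "'v \<Rightarrow> 'v \<Rightarrow> bool" and p :: 'v and S :: "'v set"
  assumes symE': "\<And>a b. E' a b \<Longrightarrow> E' b a" and symE: "\<And>a b. E a b \<Longrightarrow> E b a"
    and irrE': "\<And>a. \<not> E' a a" and irrE: "\<And>a. \<not> E a a"
    and winE': "\<And>a b. E' a b \<Longrightarrow> a \<in> V' \<and> b \<in> V'"
    and winE: "\<And>a b. E a b \<Longrightarrow> a \<in> V \<and> b \<in> V"
    and pV': "p \<in> V'" and Sne: "S \<noteq> {}" and SV': "S \<inter> V' = {}"
    and Vdef: "V = (V' - {p}) \<union> S"
    and A1: "\<And>a b. a \<notin> S \<Longrightarrow> b \<notin> S \<Longrightarrow> a \<noteq> p \<Longrightarrow> b \<noteq> p \<Longrightarrow> E a b \<longleftrightarrow> E' a b"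
    and A2: "\<And>s b. s \<in> S \<Longrightarrow> E s b \<Longrightarrow> E' p b"
    and Ttree: "is_tree (S \<union> {n. E' p n}) (\<lambda>a b. E a b \<and> (a \<in> S \<or> b \<in> S))"
begin

definition N where "N = {n. E' p n}"
definition TE where "TE a b \<longleftrightarrow> E a b \<and> (a \<in> S \<or> b \<in> S)"
definition phi where "phi a = (if a \<in> S then p else a)"

lemma pnV: "p \<notin> V" using Vdef SV' pV' by auto
lemma pnS: "p \<notin> S" using SV' pV' by auto
lemma NV': "n \<in> N \<Longrightarrow> n \<in> V' \<and> n \<noteq> p \<and> n \<notin> S"
  using winE' irrE' SV' by (auto simp: N_def)

lemma A2': "s \<in> S \<Longrightarrow> E b s \<Longrightarrow> b \<in> N"
  using A2 symE by (auto simp: N_def)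
lemma A2'': "s \<in> S \<Longrightarrow> E s b \<Longrightarrow> b \<in> N"
  using A2 by (auto simp: N_def)

lemma TE_sym: "TE a b \<Longrightarrow> TE b a" using symE by (auto simp: TE_def)
lemma TE_irr: "\<not> TE a a" using irrE by (auto simp: TE_def)
lemma TE_win: "TE a b \<Longrightarrow> a \<in> S \<union> N \<and> b \<in> S \<union> N"
  using A2' A2'' by (auto simp: TE_def)

lemma Ttree': "is_tree (S \<union> N) TE"
  using Ttree unfolding N_def TE_def[abs_def] by simp

lemma T_conn: "a \<in> S \<union> N \<Longrightarrow> b \<in> S \<union> N \<Longrightarrow> TE\<^sup>*\<^sup>* a b"
  using Ttree' conn_simp[of TE "S \<union> N", OF TE_win] unfolding is_tree_def by blast

lemma T_acyc: "\<not> (\<exists>x y. TE x y \<and> (rem TE x y)\<^sup>*\<^sup>* y x)"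
  using Ttree' cycle_iff[of TE "S \<union> N", OF TE_sym TE_irr TE_win] unfolding is_tree_def by blast

lemma lift:
  assumes Q: "Q\<^sup>*\<^sup>* a' b'" and QE: "\<And>a b. Q a b \<Longrightarrow> E' a b"
    and QT: "\<And>a b. TE a b \<Longrightarrow> QB a b"
    and QQ: "\<And>a b. a \<notin> S \<Longrightarrow> b \<notin> S \<Longrightarrow> a \<noteq> p \<Longrightarrow> b \<noteq> p \<Longrightarrow> Q a b \<Longrightarrow> QB a b"
    and a: "a \<in> V" "phi a = a'"
  shows "b \<in> V \<Longrightarrow> phi b = b' \<Longrightarrow> QB\<^sup>*\<^sup>* a b"
  using Q
proof (induction arbitrary: b rule: rtranclp_induct)
  case base
  show ?case
  proof (cases "a \<in> S")
    case True
    then have "b \<in> S" using base pnV a by (auto simp: phi_def split: if_splits)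
    then show ?thesis using T_conn[of a b] True by (auto intro: mono_rtranclp[rule_format, OF QT])
  next
    case False
    then have "b \<notin> S" using base pnV a by (auto simp: phi_def split: if_splits)
    then show ?thesis using False base a by (auto simp: phi_def)
  qed
next
  case (step b' c' c)
  have b'V: "b' \<in> V'" using QE[OF step(2)] winE' by blast
  obtain b0 where b0: "b0 \<in> V" "phi b0 = b'"
  proof (cases "b' = p")
    case True
    obtain s where "s \<in> S" using Sne by blast
    then show ?thesis using that[of s] True Vdef by (auto simp: phi_def)
  next
    case False
    have "b' \<notin> S" using b'V SV' by auto
    moreover have "b' \<in> V" using b'V Vdef False by auto
    ultimately show ?thesis using that[of b'] by (simp add: phi_def)
  qed
  have IH: "QB\<^sup>*\<^sup>* a b0" using step(3) b0 by blast
  have E'bc: "E' b' c'" using QE[OF step(2)] .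
  have "QB\<^sup>*\<^sup>* b0 c"
  proof (cases "b0 \<in> S")
    case True
    then have bp: "b' = p" using b0 by (simp add: phi_def)
    show ?thesis
    proof (cases "c \<in> S")
      case True
      then have "c' = p" using step(5) by (simp add: phi_def)
      then show ?thesis using E'bc bp irrE' by simp
    next
      case False
      then have "c = c'" using step(5) by (simp add: phi_def)
      then have "c \<in> N" using E'bc bp by (simp add: N_def)
      then show ?thesis using T_conn[of b0 c] True by (auto intro: mono_rtranclp[rule_format, OF QT])
    qed
  next
    case False
    then have bb: "b0 = b'" using b0 by (simp add: phi_def)
    have b0p: "b0 \<noteq> p" using b0 pnV by auto
    show ?thesis
    proof (cases "c \<in> S")
      case True
      then have "c' = p" using step(5) by (simp add: phi_def)
      then have "b0 \<in> N" using E'bc bb symE' by (simp add: N_def)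
      then show ?thesis using T_conn[of b0 c] True by (auto intro: mono_rtranclp[rule_format, OF QT])
    next
      case cF: False
      then have "c = c'" using step(5) by (simp add: phi_def)
      moreover have "c \<noteq> p" using step(4) pnV by auto
      ultimately show ?thesis using QQ[of b0 c] step(2) bb False cF b0p by auto
    qed
  qed
  then show ?case using IH by simp
qed

lemma push_edge: "E a b \<Longrightarrow> E' (phi a) (phi b)"
proof -
  assume e: "E a b"
  show ?thesis
  proof (cases "a \<in> S")
    case True then show ?thesis using A2''[OF True e] NV' by (auto simp: phi_def N_def)
  next
    case F: False
    show ?thesis
    proof (cases "b \<in> S")
      case True then show ?thesis using A2'[OF True e] NV' F symE' by (auto simp: phi_def N_def)
    next
      case False
      have "a \<noteq> p" "b \<noteq> p" using winE[OF e] pnV by auto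
      then show ?thesis using A1[of a b] F False e by (simp add: phi_def)
    qed
  qed
qed

lemma conn_equiv: "graph_connected V E \<longleftrightarrow> graph_connected V' E'"
proof -
  have cV: "graph_connected V E \<longleftrightarrow> (\<forall>x\<in>V. \<forall>y\<in>V. E\<^sup>*\<^sup>* x y)" using conn_simp winE by metis
  have cV': "graph_connected V' E' \<longleftrightarrow> (\<forall>x\<in>V'. \<forall>y\<in>V'. E'\<^sup>*\<^sup>* x y)" using conn_simp winE' by metis
  have pre: "\<exists>a\<in>V. phi a = a'" if "a' \<in> V'" for a'
  proof (cases "a' = p")
    case True
    obtain s where "s \<in> S" using Sne by blast
    then show ?thesis using True Vdef by (auto simp: phi_def)
  next
    case False
    then show ?thesis using that Vdef SV' by (intro bexI[of _ a']) (auto simp: phi_def)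
  qed
  show ?thesis
  proof
    assume c: "graph_connected V E"
    show "graph_connected V' E'" unfolding cV'
    proof (intro ballI)
      fix x y assume "x \<in> V'" "y \<in> V'"
      then obtain a b where "a \<in> V" "phi a = x" "b \<in> V" "phi b = y" using pre by blast
      then show "E'\<^sup>*\<^sup>* x y" using c cV rtranclp_map[of E E' phi, OF push_edge] by blast
    qed
  next
    assume c: "graph_connected V' E'"
    show "graph_connected V E" unfolding cV
    proof (intro ballI)
      fix a b assume ab: "a \<in> V" "b \<in> V"
      have "phi a \<in> V'" "phi b \<in> V'" using ab Vdef pV' by (auto simp: phi_def)
      then have "E'\<^sup>*\<^sup>* (phi a) (phi b)" using c cV' by blast
      have qt: "\<And>x y. TE x y \<Longrightarrow> E x y" by (simp add: TE_def)
      have qq: "\<And>x y. x \<notin> S \<Longrightarrow> y \<notin> S \<Longrightarrow> x \<noteq> p \<Longrightarrow> y \<noteq> p \<Longrightarrow> E' x y \<Longrightarrow> E x y"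
        using A1 by blast
      note l = lift[where Q="E'" and QB="E"]
      show "E\<^sup>*\<^sup>* a b"
        by (rule l[OF \<open>E'\<^sup>*\<^sup>* (phi a) (phi b)\<close> _ qt qq ab(1) refl ab(2) refl])
    qed
  qed
qed


lemma C_sub: "(rem TE s n)\<^sup>*\<^sup>* s v \<Longrightarrow> s \<in> S \<Longrightarrow> v \<in> S \<union> N"
  by (induction rule: rtranclp_induct) (auto simp: rem_def dest: TE_win)

lemma inv:
  assumes w: "(rem E s n)\<^sup>*\<^sup>* s y" and sS: "s \<in> S"
  defines "C \<equiv> {v. (rem TE s n)\<^sup>*\<^sup>* s v}"
  defines "AS \<equiv> (\<lambda>u v. E u v \<and> u \<notin> S \<and> v \<notin> S)"
  shows "y \<in> C \<or> (\<exists>m1 m2. m1 \<in> C \<and> m1 \<in> N \<and> m2 \<in> N \<and> m2 \<notin> C \<and> AS\<^sup>*\<^sup>* m1 m2)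
        \<or> (\<exists>m1. m1 \<in> C \<and> m1 \<in> N \<and> AS\<^sup>*\<^sup>* m1 y \<and> y \<notin> S)"
  using w
proof (induction rule: rtranclp_induct)
  case base then show ?case by (simp add: C_def)
next
  case (step y y')
  have e: "E y y'" and nr: "\<not> (y = s \<and> y' = n)" "\<not> (y = n \<and> y' = s)"
    using step(2) by (auto simp: rem_def)
  have CN: "v \<in> C \<Longrightarrow> v \<in> S \<union> N" for v using C_sub sS by (auto simp: C_def)
  have Cstep: "v \<in> C \<Longrightarrow> TE v v' \<Longrightarrow> \<not> (v = s \<and> v' = n) \<Longrightarrow> \<not> (v = n \<and> v' = s) \<Longrightarrow> v' \<in> C" for v v'
    by (auto simp: C_def rem_def intro: rtranclp.rtrancl_into_rtrancl)
  from step(3) show ?case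
  proof (elim disjE exE conjE)
    assume yC: "y \<in> C"
    show ?case
    proof (cases "y \<in> S")
      case True
      then have "TE y y'" using e by (simp add: TE_def)
      then show ?thesis using Cstep[OF yC] nr by blast
    next
      case False
      then have yN: "y \<in> N" using CN yC by blast
      show ?thesis
      proof (cases "y' \<in> S")
        case True
        then have "TE y y'" using e by (simp add: TE_def)
        then show ?thesis using Cstep[OF yC] nr by blast
      next
        case y'F: False
        have "AS\<^sup>*\<^sup>* y y'" using e False y'F by (auto simp: AS_def)
        then show ?thesis using yC yN y'F by blast
      qed
    qed
  next
    fix m1 m2 assume "m1 \<in> C" "m1 \<in> N" "m2 \<in> N" "m2 \<notin> C" "AS\<^sup>*\<^sup>* m1 m2"
    then show ?case by blast
  next
    fix m1 assume m1: "m1 \<in> C" "m1 \<in> N" "AS\<^sup>*\<^sup>* m1 y" "y \<notin> S"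
    show ?case
    proof (cases "y' \<in> S")
      case True
      then have yN: "y \<in> N" using A2' e by blast
      have TEy: "TE y y'" using e True by (simp add: TE_def)
      show ?thesis
      proof (cases "y \<in> C")
        case True
        then show ?thesis using Cstep[OF True TEy] nr by blast
      next
        case False
        then show ?thesis using m1 yN by blast
      qed
    next
      case False
      have "AS\<^sup>*\<^sup>* m1 y'" using m1 e False by (auto simp: AS_def intro: rtranclp.rtrancl_into_rtrancl)
      then show ?thesis using m1 False by blast
    qed
  qed
qed

lemma cyc_equiv: "graph_has_cycle V E \<longleftrightarrow> graph_has_cycle V' E'"
proof -
  have cV: "graph_has_cycle V E \<longleftrightarrow> (\<exists>x y. E x y \<and> (rem E x y)\<^sup>*\<^sup>* y x)"
    using cycle_iff[of E V, OF symE irrE winE] by blast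
  have cV': "graph_has_cycle V' E' \<longleftrightarrow> (\<exists>x y. E' x y \<and> (rem E' x y)\<^sup>*\<^sup>* y x)"
    using cycle_iff[of E' V', OF symE' irrE' winE'] by blast
  show ?thesis
  proof
    assume "graph_has_cycle V E"
    then obtain x y where xy: "E x y" "(rem E x y)\<^sup>*\<^sup>* y x" using cV by blast
    show "graph_has_cycle V' E'"
    proof (cases "x \<in> S \<or> y \<in> S")
      case False
      have xyV: "x \<in> V" "y \<in> V" using winE[OF xy(1)] by auto
      then have xp: "x \<noteq> p" "y \<noteq> p" using pnV by auto
      have "E' x y" using A1[of x y] False xp xy(1) by simp
      have phx: "phi x = x" "phi y = y" using False by (auto simp: phi_def)
      have "rem E' x y (phi a) (phi b)" if "rem E x y a b" for a b
      proof -
        have e: "E a b" and nr: "\<not> (a = x \<and> b = y)" "\<not> (a = y \<and> b = x)" using that by (auto simp: rem_def)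
        have "phi a = x \<Longrightarrow> a = x" "phi a = y \<Longrightarrow> a = y" "phi b = x \<Longrightarrow> b = x" "phi b = y \<Longrightarrow> b = y"
          using xp by (auto simp: phi_def split: if_splits)
        then show ?thesis using push_edge[OF e] nr by (auto simp: rem_def)
      qed
      then have "(rem E' x y)\<^sup>*\<^sup>* (phi y) (phi x)" using rtranclp_map[of "rem E x y" "rem E' x y" phi] xy(2) by blast
      then show ?thesis using cV' \<open>E' x y\<close> phx by auto
    next
      case True
      obtain s n where sn: "s \<in> S" "E s n" "(rem E s n)\<^sup>*\<^sup>* s n"
      proof (cases "x \<in> S")
        case True
        have "(rem E x y)\<^sup>*\<^sup>* x y" using rem_rev[OF symE xy(2)] by blast
        then show ?thesis using that[of x y] True xy(1) by blast
      next
        case False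
        then have "y \<in> S" using \<open>x \<in> S \<or> y \<in> S\<close> by blast
        moreover have "E y x" using symE[OF xy(1)] .
        moreover have "(rem E y x)\<^sup>*\<^sup>* y x" using xy(2) rem_swap[of E x y] by simp
        ultimately show ?thesis using that[of y x] by blast
      qed
      have nN: "n \<in> N" using A2''[OF sn(1,2)] .
      define C where "C = {v. (rem TE s n)\<^sup>*\<^sup>* s v}"
      define AS where "AS = (\<lambda>u v. E u v \<and> u \<notin> S \<and> v \<notin> S)"
      have nC: "n \<notin> C"
      proof
        assume "n \<in> C"
        then have "(rem TE s n)\<^sup>*\<^sup>* s n" by (simp add: C_def)
        then have "(rem TE s n)\<^sup>*\<^sup>* n s" using rem_rev[of TE, OF TE_sym] by blast
        moreover have "TE s n" using sn by (simp add: TE_def)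
        ultimately show False using T_acyc by blast
      qed
      have nS: "n \<notin> S" using NV' nN by blast
      have iv: "n \<in> C \<or> (\<exists>m1 m2. m1 \<in> C \<and> m1 \<in> N \<and> m2 \<in> N \<and> m2 \<notin> C \<and> AS\<^sup>*\<^sup>* m1 m2)
        \<or> (\<exists>m1. m1 \<in> C \<and> m1 \<in> N \<and> AS\<^sup>*\<^sup>* m1 n \<and> n \<notin> S)"
        using inv[OF sn(3) sn(1)] unfolding C_def AS_def .
      have "\<exists>m1 m2. m1 \<in> C \<and> m1 \<in> N \<and> m2 \<in> N \<and> m2 \<notin> C \<and> AS\<^sup>*\<^sup>* m1 m2"
        using iv
      proof (elim disjE)
        assume "\<exists>m1. m1 \<in> C \<and> m1 \<in> N \<and> AS\<^sup>*\<^sup>* m1 n \<and> n \<notin> S"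
        then obtain m1 where "m1 \<in> C \<and> m1 \<in> N \<and> AS\<^sup>*\<^sup>* m1 n" by blast
        then show ?thesis using nN nC by blast
      qed (use nC in auto)
      then obtain m1 m2 where m: "m1 \<in> C" "m1 \<in> N" "m2 \<in> N" "m2 \<notin> C" "AS\<^sup>*\<^sup>* m1 m2" by blast
      have mne: "m1 \<noteq> m2" using m by blast
      have "rem E' p m1 a b" if "AS a b" for a b
      proof -
        have "E a b" "a \<notin> S" "b \<notin> S" using that by (auto simp: AS_def)
        moreover have "a \<noteq> p" "b \<noteq> p" using winE[OF \<open>E a b\<close>] pnV by auto
        ultimately show ?thesis using A1[of a b] by (auto simp: rem_def)
      qed
      then have w: "(rem E' p m1)\<^sup>*\<^sup>* m1 m2" using mono_rtranclp[rule_format, of AS "rem E' p m1"] m(5) by blast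
      have "rem E' p m1 m2 p" using m(3) mne symE' NV'[OF m(3)] by (auto simp: rem_def N_def)
      then have "(rem E' p m1)\<^sup>*\<^sup>* m1 p" using w by (meson rtranclp.rtrancl_into_rtrancl)
      moreover have "E' p m1" using m(2) by (simp add: N_def)
      ultimately show ?thesis using cV' by blast
    qed
  next
    assume "graph_has_cycle V' E'"
    then obtain x y where xy: "E' x y" "(rem E' x y)\<^sup>*\<^sup>* y x" using cV' by blast
    show "graph_has_cycle V E"
    proof (cases "x = p \<or> y = p")
      case False
      have xyV: "x \<in> V'" "y \<in> V'" using winE'[OF xy(1)] by auto
      then have xS: "x \<notin> S" "y \<notin> S" using SV' by auto
      have xV: "x \<in> V" "y \<in> V" using xyV False Vdef by auto
      have "E x y" using A1[of x y] False xS xy(1) by simp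
      have phx: "phi x = x" "phi y = y" using xS by (auto simp: phi_def)
      have qt: "\<And>a b. TE a b \<Longrightarrow> rem E x y a b" using xS by (auto simp: TE_def rem_def)
      have qq: "\<And>a b. a \<notin> S \<Longrightarrow> b \<notin> S \<Longrightarrow> a \<noteq> p \<Longrightarrow> b \<noteq> p \<Longrightarrow> rem E' x y a b \<Longrightarrow> rem E x y a b"
        using A1 by (auto simp: rem_def)
      have qe: "\<And>a b. rem E' x y a b \<Longrightarrow> E' a b" by (simp add: rem_def)
      note l = lift[where Q="rem E' x y" and QB="rem E x y"]
      have "(rem E x y)\<^sup>*\<^sup>* y x"
        by (rule l[OF xy(2) qe qt qq xV(2) phx(2) xV(1) phx(1)])
      then show ?thesis using cV \<open>E x y\<close> by blast
    next
      case True
      obtain n where pn: "E' p n" "(rem E' p n)\<^sup>*\<^sup>* n p"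
      proof (cases "x = p")
        case True
        then show ?thesis using that[of y] xy by blast
      next
        case False
        then have yp: "y = p" using \<open>x = p \<or> y = p\<close> by blast
        have "(rem E' x y)\<^sup>*\<^sup>* x y" using rem_rev[OF symE' xy(2)] by blast
        then have "(rem E' p x)\<^sup>*\<^sup>* x p" using yp rem_swap[of E' x y] by simp
        moreover have "E' p x" using symE'[OF xy(1)] yp by simp
        ultimately show ?thesis using that[of x] by blast
      qed
      have np: "n \<noteq> p" using pn(1) irrE' by blast
      have fh: "((\<lambda>u v. rem E' p n u v \<and> u \<noteq> p \<and> v \<noteq> p)\<^sup>*\<^sup>* n p \<and> p \<noteq> p) \<or>
         (\<exists>m. (\<lambda>u v. rem E' p n u v \<and> u \<noteq> p \<and> v \<noteq> p)\<^sup>*\<^sup>* n m \<and> rem E' p n m p)"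
        by (rule first_hit[OF pn(2) np])
      obtain m where m: "(\<lambda>u v. rem E' p n u v \<and> u \<noteq> p \<and> v \<noteq> p)\<^sup>*\<^sup>* n m" "rem E' p n m p"
        using fh by blast
      have mn: "m \<noteq> n" using m(2) by (auto simp: rem_def)
      have mN: "m \<in> N" using m(2) symE' by (auto simp: rem_def N_def)
      have nN: "n \<in> N" using pn(1) by (simp add: N_def)
      have "TE\<^sup>*\<^sup>* m n" using T_conn mN nN by blast
      then have "\<exists>z. TE m z \<and> (rem TE m z)\<^sup>*\<^sup>* z n" using first_step[of TE m n] mn by blast
      then obtain z where z: "TE m z" "(rem TE m z)\<^sup>*\<^sup>* z n" by blast
      have mS: "m \<notin> S" using NV' mN by blast
      have zS: "z \<in> S" using z(1) mS by (simp add: TE_def)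
      have rr: "rem TE m z a b \<longrightarrow> rem E m z a b" for a b by (auto simp: rem_def TE_def)
      have w1: "(rem E m z)\<^sup>*\<^sup>* z n"
        using mono_rtranclp[of "rem TE m z" "rem E m z", OF rr] z(2) by blast
      have "rem E m z a b" if "rem E' p n a b \<and> a \<noteq> p \<and> b \<noteq> p" for a b
      proof -
        have e: "E' a b" "a \<noteq> p" "b \<noteq> p" using that by (auto simp: rem_def)
        then have "a \<notin> S" "b \<notin> S" using winE'[OF e(1)] SV' by auto
        then show ?thesis using A1[of a b] e zS by (auto simp: rem_def)
      qed
      then have w2: "(rem E m z)\<^sup>*\<^sup>* n m"
        using mono_rtranclp[of "\<lambda>u v. rem E' p n u v \<and> u \<noteq> p \<and> v \<noteq> p" "rem E m z"] m(1) by blast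
      have "(rem E m z)\<^sup>*\<^sup>* z m" using w1 w2 by (rule rtranclp_trans)
      moreover have "E m z" using z(1) by (simp add: TE_def)
      ultimately show ?thesis using cV by blast
    qed
  qed
qed

lemma tree_equiv: "is_tree V E \<longleftrightarrow> is_tree V' E'"
proof -
  have "V \<noteq> {}" using Sne Vdef by auto
  moreover have "V' \<noteq> {}" using pV' by auto
  ultimately show ?thesis unfolding is_tree_def using conn_equiv cyc_equiv by blast
qed

end



lemma lang_suffix: "u @ v \<in> lang X \<Longrightarrow> v \<in> lang X"
proof -
  assume "u @ v \<in> lang X"
  then obtain x i where x: "x \<in> X" "\<forall>j<length (u@v). (u@v) ! j = x (i + int j)" by (auto simp: lang_def)
  have "\<forall>j<length v. v ! j = x ((i + int (length u)) + int j)"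
  proof (intro allI impI)
    fix j assume "j < length v"
    then show "v ! j = x ((i + int (length u)) + int j)"
      using x(2)[rule_format, of "length u + j"] by (simp add: nth_append add.assoc)
  qed
  then show ?thesis using x(1) by (auto simp: lang_def)
qed

lemma lang_prefix: "u @ v \<in> lang X \<Longrightarrow> u \<in> lang X"
proof -
  assume "u @ v \<in> lang X"
  then obtain x i where x: "x \<in> X" "\<forall>j<length (u@v). (u@v) ! j = x (i + int j)" by (auto simp: lang_def)
  have "\<forall>j<length u. u ! j = x (i + int j)"
  proof (intro allI impI)
    fix j assume "j < length u"
    then show "u ! j = x (i + int j)" using x(2)[rule_format, of j] by (simp add: nth_append)
  qed
  then show ?thesis using x(1) by (auto simp: lang_def)
qed

lemma lang_left: "w \<in> lang X \<Longrightarrow> \<exists>c. c # w \<in> lang X"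
proof -
  assume "w \<in> lang X"
  then obtain x i where x: "x \<in> X" "\<forall>j<length w. w ! j = x (i + int j)" by (auto simp: lang_def)
  have "\<forall>j<length (x (i - 1) # w). (x (i - 1) # w) ! j = x ((i - 1) + int j)"
  proof (intro allI impI)
    fix j assume j: "j < length (x (i - 1) # w)"
    show "(x (i - 1) # w) ! j = x ((i - 1) + int j)"
    proof (cases j)
      case 0 then show ?thesis by simp
    next
      case (Suc k)
      then show ?thesis using x(2)[rule_format, of k] j by simp
    qed
  qed
  then show ?thesis using x(1) by (auto simp: lang_def)
qed

lemma ext_sym: "ext_edge X U V w a b \<Longrightarrow> ext_edge X U V w b a"
  by (cases a; cases b) auto
lemma ext_irr: "\<not> ext_edge X U V w a a"
  by (cases a) auto
lemma ext_win: "ext_edge X U V w a b \<Longrightarrow> a \<in> ext_vertices X U V w \<and> b \<in> ext_vertices X U V w"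
  by (cases a; cases b) (auto simp: ext_vertices_def)

lemma tree_iso:
  assumes T: "is_tree Vs E1" and inj: "inj_on f Vs" and img: "f ` Vs = Vs2"
    and ed: "\<And>a b. a \<in> Vs \<Longrightarrow> b \<in> Vs \<Longrightarrow> E2 (f a) (f b) \<longleftrightarrow> E1 a b"
    and w1: "\<And>a b. E1 a b \<Longrightarrow> a \<in> Vs \<and> b \<in> Vs"
    and w2: "\<And>a b. E2 a b \<Longrightarrow> a \<in> Vs2 \<and> b \<in> Vs2"
  shows "is_tree Vs2 E2"
proof -
  have ne: "Vs2 \<noteq> {}" using T img unfolding is_tree_def by auto
  have c1: "\<forall>x\<in>Vs. \<forall>y\<in>Vs. E1\<^sup>*\<^sup>* x y" using T conn_simp[of E1 Vs] w1 unfolding is_tree_def by blast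
  have m: "E2 (f a) (f b)" if "E1 a b" for a b using ed w1 that by blast
  have cs2: "graph_connected Vs2 E2 \<longleftrightarrow> (\<forall>x\<in>Vs2. \<forall>y\<in>Vs2. E2\<^sup>*\<^sup>* x y)"
    by (rule conn_simp) (use w2 in blast)
  have c2: "graph_connected Vs2 E2"
    unfolding cs2
  proof (intro ballI)
    fix x y assume "x \<in> Vs2" "y \<in> Vs2"
    then obtain a b where "a \<in> Vs" "b \<in> Vs" "x = f a" "y = f b" using img by blast
    then show "E2\<^sup>*\<^sup>* x y" using c1 rtranclp_map[of E1 E2 f, OF m] by blast
  qed
  have nc: "\<not> graph_has_cycle Vs2 E2"
  proof
    assume "graph_has_cycle Vs2 E2"
    then obtain cs where cs: "length cs \<ge> 3" "distinct cs" "set cs \<subseteq> Vs2"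
      "\<forall>i < length cs. E2 (cs ! i) (cs ! ((i + 1) mod length cs))"
      unfolding graph_has_cycle_def by blast
    define g where "g = inv_into Vs f"
    have fg: "y \<in> Vs2 \<Longrightarrow> f (g y) = y" for y using img g_def by (simp add: f_inv_into_f)
    have gV: "y \<in> Vs2 \<Longrightarrow> g y \<in> Vs" for y using img g_def by (auto intro: inv_into_into)
    have ginj: "inj_on g Vs2" unfolding inj_on_def using fg by metis
    have "graph_has_cycle Vs E1"
      unfolding graph_has_cycle_def
    proof (intro exI[of _ "map g cs"] conjI)
      show "3 \<le> length (map g cs)" using cs by simp
      show "distinct (map g cs)" using cs ginj by (simp add: distinct_map inj_on_subset)
      show "set (map g cs) \<subseteq> Vs" using cs gV by auto
      show "\<forall>i<length (map g cs). E1 (map g cs ! i) (map g cs ! ((i + 1) mod length (map g cs)))"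
      proof (intro allI impI)
        fix i assume i: "i < length (map g cs)"
        have "0 < length cs" using i by (cases cs) auto
        then have j: "(i + 1) mod length cs < length cs" by (rule mod_less_divisor)
        have a: "cs ! i \<in> Vs2" "cs ! ((i + 1) mod length cs) \<in> Vs2" using cs(3) i j by auto
        have "E2 (f (g (cs ! i))) (f (g (cs ! ((i + 1) mod length cs))))"
          using cs(4) i fg a by simp
        then show "E1 (map g cs ! i) (map g cs ! ((i + 1) mod length (map g cs)))"
          using ed gV a i j by simp
      qed
    qed
    then show False using T unfolding is_tree_def by blast
  qed
  show ?thesis unfolding is_tree_def using ne c2 nc by blast
qed




theorem mainTheorem14:
  fixes X :: "(int \<Rightarrow> 'a::finite) set"
    and U V :: "'a list set" and w l :: "'a list"
  assumes "shift_space X"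
    and "w \<in> lang X"
    and "finite U" and "X_max_suffix_code X U"
    and "finite V" and "X_max_prefix_code X V"
    and "l \<in> lang X" and "l @ w \<in> lang X"
    and "{a @ l | a. a \<in> letters} \<inter> lang X \<subseteq> U"
    and "ext_graph_is_tree X letters V (l @ w)"
  shows "ext_graph_is_tree X ((U - {a @ l | a. a \<in> letters}) \<union> {l}) V w
         \<longleftrightarrow> ext_graph_is_tree X U V w"
proof -
  have Aeq: "{a @ l | a. a \<in> letters} = {c # l | c. True}" by (auto simp: letters_def)
  define U' where "U' = (U - {a @ l |a. a \<in> letters}) \<union> {l}"
  have memU': "u \<in> U' \<longleftrightarrow> (u \<in> U \<and> (\<forall>c. u \<noteq> c # l)) \<or> u = l" for u
    using Aeq by (auto simp: U'_def)
  have A9: "c # l \<in> U" if "c # l \<in> lang X" for c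
    using assms(9) Aeq that by blast
  obtain c0 where c0: "c0 # (l @ w) \<in> lang X" using lang_left[OF assms(8)] by blast
  have c0l: "c0 # l \<in> lang X" using lang_prefix[of "c0 # l" w] c0 by simp
  have lnU: "l \<notin> U"
  proof
    assume lU: "l \<in> U"
    have sc: "suffix_code U" using assms(4) by (simp add: X_max_suffix_code_def)
    have "suffix l (c0 # l)" by (simp add: suffix_def)
    then have "l = c0 # l" using sc lU A9[OF c0l] unfolding suffix_code_def by blast
    then show False by simp
  qed
  define Sset where "Sset = {u. (\<exists>c. u = c # l) \<and> u \<in> U \<and> u @ w \<in> lang X}"
  have Sset_eq: "Sset = {c # l | c. c # l @ w \<in> lang X}"
  proof -
    have "c # l @ w \<in> lang X \<Longrightarrow> c # l \<in> U" for c
      using A9 lang_prefix[of "c # l" w] by simp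
    then show ?thesis unfolding Sset_def by auto
  qed
  define Vs' where "Vs' = ext_vertices X U' V w"
  define Vs where "Vs = ext_vertices X U V w"
  define E' where "E' = ext_edge X U' V w"
  define E where "E = ext_edge X U V w"
  have wvs: "w @ v \<in> lang X" if "l @ w @ v \<in> lang X" for v
    using lang_suffix[of l "w @ v"] that by simp
  have Neq: "{n. E' (Inl l) n} = Inr ` {v \<in> V. l @ w @ v \<in> lang X}"
  proof (intro set_eqI iffI)
    fix n :: "'a list + 'a list" assume "n \<in> {n. E' (Inl l) n}"
    then show "n \<in> Inr ` {v \<in> V. l @ w @ v \<in> lang X}"
      by (cases n) (auto simp: E'_def R_set_def)
  next
    fix n :: "'a list + 'a list" assume "n \<in> Inr ` {v \<in> V. l @ w @ v \<in> lang X}"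
    then show "n \<in> {n. E' (Inl l) n}"
      using wvs assms(8) by (auto simp: E'_def R_set_def L_set_def memU')
  qed
  have symE': "\<And>a b. E' a b \<Longrightarrow> E' b a" unfolding E'_def by (rule ext_sym)
  have symE: "\<And>a b. E a b \<Longrightarrow> E b a" unfolding E_def by (rule ext_sym)
  have irrE': "\<And>a. \<not> E' a a" unfolding E'_def by (rule ext_irr)
  have irrE: "\<And>a. \<not> E a a" unfolding E_def by (rule ext_irr)
  have winE': "\<And>a b. E' a b \<Longrightarrow> a \<in> Vs' \<and> b \<in> Vs'" unfolding E'_def Vs'_def by (rule ext_win)
  have winE: "\<And>a b. E a b \<Longrightarrow> a \<in> Vs \<and> b \<in> Vs" unfolding E_def Vs_def by (rule ext_win)
  have pV': "Inl l \<in> Vs'" using assms(8) by (simp add: Vs'_def ext_vertices_def L_set_def memU')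
  have Sne: "Inl ` Sset \<noteq> {}" using c0 Sset_eq by auto
  have SV': "Inl ` Sset \<inter> Vs' = {}"
    by (auto simp: Vs'_def ext_vertices_def L_set_def memU' Sset_def)
  have Vdef: "Vs = (Vs' - {Inl l}) \<union> Inl ` Sset"
  proof (intro set_eqI)
    fix x show "x \<in> Vs \<longleftrightarrow> x \<in> (Vs' - {Inl l}) \<union> Inl ` Sset"
      using lnU by (cases x) (auto simp: Vs_def Vs'_def ext_vertices_def L_set_def memU' Sset_def)
  qed
  have A1: "\<And>a b. a \<notin> Inl ` Sset \<Longrightarrow> b \<notin> Inl ` Sset \<Longrightarrow> a \<noteq> Inl l \<Longrightarrow> b \<noteq> Inl l \<Longrightarrow> E a b \<longleftrightarrow> E' a b"
  proof -
    fix a b :: "'a list + 'a list"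
    assume h: "a \<notin> Inl ` Sset" "b \<notin> Inl ` Sset" "a \<noteq> Inl l" "b \<noteq> Inl l"
    show "E a b \<longleftrightarrow> E' a b"
      using h by (cases a; cases b) (auto simp: E_def E'_def L_set_def memU' Sset_def)
  qed
  have A2: "\<And>s b. s \<in> Inl ` Sset \<Longrightarrow> E s b \<Longrightarrow> E' (Inl l) b"
  proof -
    fix s b assume s: "s \<in> Inl ` Sset" and e: "E s b"
    then obtain c where sc: "s = Inl (c # l)" by (auto simp: Sset_def)
    then obtain v where bv: "b = Inr v" using e by (cases b) (auto simp: E_def)
    have "(c # l) @ w @ v \<in> lang X" "v \<in> R_set X V w" using e sc bv by (auto simp: E_def)
    moreover then have "l @ w @ v \<in> lang X" using lang_suffix[of "[c]" "l @ w @ v"] by simp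
    ultimately show "E' (Inl l) b" using bv assms(8) by (simp add: E'_def L_set_def memU')
  qed
  define f :: "'a list + 'a list \<Rightarrow> 'a list + 'a list" where "f = case_sum (\<lambda>u. Inl (u @ l)) Inr"
  define TV where "TV = ext_vertices X letters V (l @ w)"
  have TV_eq: "TV = Inl ` {[c] | c. c # l @ w \<in> lang X} \<union> Inr ` {v \<in> V. l @ w @ v \<in> lang X}"
    by (auto simp: TV_def ext_vertices_def L_set_def R_set_def letters_def)
  have Ttree: "is_tree (Inl ` Sset \<union> {n. E' (Inl l) n}) (\<lambda>a b. E a b \<and> (a \<in> Inl ` Sset \<or> b \<in> Inl ` Sset))"
  proof (rule tree_iso[of TV "ext_edge X letters V (l @ w)" f])
    show "is_tree TV (ext_edge X letters V (l @ w))"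
      using assms(10) by (simp add: TV_def ext_graph_is_tree_def)
    show "inj_on f TV" by (auto simp: inj_on_def f_def split: sum.splits)
    show "f ` TV = Inl ` Sset \<union> {n. E' (Inl l) n}"
    proof -
      have "(\<lambda>x. x @ l) ` {[c] | c. c # l @ w \<in> lang X} = {c # l | c. c # l @ w \<in> lang X}"
        by auto
      moreover have "(\<lambda>x. Inl (x @ l)) ` {[c] | c. c # l @ w \<in> lang X} = Inl ` ((\<lambda>x. x @ l) ` {[c] | c. c # l @ w \<in> lang X})"
        by (simp add: image_image)
      ultimately have "(\<lambda>x. Inl (x @ l)) ` {[c] | c. c # l @ w \<in> lang X} = Inl ` {c # l | c. c # l @ w \<in> lang X}"
        by simp
      then have eq2: "(\<lambda>x. Inl (x @ l)) ` {[c] | c. c # l @ w \<in> lang X} = Inl ` {c # l | c. c # l @ w \<in> lang X}" .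
      have "f ` TV = (\<lambda>x. Inl (x @ l)) ` {[c] | c. c # l @ w \<in> lang X} \<union> Inr ` {v \<in> V. l @ w @ v \<in> lang X}"
        unfolding TV_eq by (simp add: f_def image_Un image_image)
      also have "\<dots> = Inl ` {c # l | c. c # l @ w \<in> lang X} \<union> Inr ` {v \<in> V. l @ w @ v \<in> lang X}"
        by (simp only: eq2)
      finally show ?thesis unfolding Neq Sset_eq .
    qed
    show "\<And>a b. ext_edge X letters V (l @ w) a b \<Longrightarrow> a \<in> TV \<and> b \<in> TV"
      unfolding TV_def by (rule ext_win)
    show "\<And>a b. E a b \<and> (a \<in> Inl ` Sset \<or> b \<in> Inl ` Sset) \<Longrightarrow>
          a \<in> Inl ` Sset \<union> {n. E' (Inl l) n} \<and> b \<in> Inl ` Sset \<union> {n. E' (Inl l) n}"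
    proof -
      fix a b assume h: "E a b \<and> (a \<in> Inl ` Sset \<or> b \<in> Inl ` Sset)"
      show "a \<in> Inl ` Sset \<union> {n. E' (Inl l) n} \<and> b \<in> Inl ` Sset \<union> {n. E' (Inl l) n}"
      proof (cases "a \<in> Inl ` Sset")
        case True
        then have "E' (Inl l) b" using A2 h by blast
        then show ?thesis using True by blast
      next
        case False
        then have bS: "b \<in> Inl ` Sset" using h by blast
        have "E b a" using symE h by blast
        then have "E' (Inl l) a" using A2 bS by blast
        then show ?thesis using bS by blast
      qed
    qed
    show "\<And>a b. a \<in> TV \<Longrightarrow> b \<in> TV \<Longrightarrow>
      (E (f a) (f b) \<and> (f a \<in> Inl ` Sset \<or> f b \<in> Inl ` Sset)) = ext_edge X letters V (l @ w) a b"
    proof -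
      fix a b assume a: "a \<in> TV" and b: "b \<in> TV"
      show "(E (f a) (f b) \<and> (f a \<in> Inl ` Sset \<or> f b \<in> Inl ` Sset)) = ext_edge X letters V (l @ w) a b"
      proof (cases a)
        case (Inl u)
        then obtain c where u: "u = [c]" "c # l @ w \<in> lang X" using a TV_eq by auto
        have cS: "c # l \<in> Sset" using u Sset_eq by auto
        show ?thesis
        proof (cases b)
          case (Inl u2) then show ?thesis using \<open>a = Inl u\<close> by (simp add: E_def f_def)
        next
          case (Inr v)
          then have v: "v \<in> V" "l @ w @ v \<in> lang X" using b TV_eq by auto
          have "c # l @ w @ v \<in> lang X \<Longrightarrow> c # l @ w \<in> lang X"
            using lang_prefix[of "c # l @ w" v] by simp
          have cU: "c # l \<in> U" "c # l @ w \<in> lang X" using cS by (auto simp: Sset_def)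
          have L1: "c # l \<in> L_set X U w" using cU by (simp add: L_set_def)
          have R1: "v \<in> R_set X V w" using v wvs by (simp add: R_set_def)
          have L2: "[c] \<in> L_set X letters (l @ w)" using u by (simp add: L_set_def letters_def)
          have R2: "v \<in> R_set X V (l @ w)" using v by (simp add: R_set_def)
          have fa: "f (Inl u) = Inl (c # l)" "f (Inr v) = Inr v" using u by (simp_all add: f_def)
          have inS: "Inl (c # l) \<in> Inl ` Sset" using cS by blast
          show ?thesis using L1 R1 L2 R2 fa inS \<open>a = Inl u\<close> Inr u(1) by (simp add: E_def cS)
        qed
      next
        case (Inr v)
        then have v: "v \<in> V" "l @ w @ v \<in> lang X" using a TV_eq by auto
        show ?thesis
        proof (cases b)
          case (Inr u2) then show ?thesis using \<open>a = Inr v\<close> by (simp add: E_def f_def)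
        next
          case (Inl u)
          then obtain c where u: "u = [c]" "c # l @ w \<in> lang X" using b TV_eq by auto
          have cS: "c # l \<in> Sset" using u Sset_eq by auto
          have "c # l @ w @ v \<in> lang X \<Longrightarrow> c # l @ w \<in> lang X"
            using lang_prefix[of "c # l @ w" v] by simp
          have cU: "c # l \<in> U" "c # l @ w \<in> lang X" using cS by (auto simp: Sset_def)
          have L1: "c # l \<in> L_set X U w" using cU by (simp add: L_set_def)
          have R1: "v \<in> R_set X V w" using v wvs by (simp add: R_set_def)
          have L2: "[c] \<in> L_set X letters (l @ w)" using u by (simp add: L_set_def letters_def)
          have R2: "v \<in> R_set X V (l @ w)" using v by (simp add: R_set_def)
          have fa: "f (Inl u) = Inl (c # l)" "f (Inr v) = Inr v" using u by (simp_all add: f_def)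
          have inS: "Inl (c # l) \<in> Inl ` Sset" using cS by blast
          show ?thesis using L1 R1 L2 R2 fa inS \<open>a = Inr v\<close> Inl u(1) by (simp add: E_def cS)
        qed
      qed
    qed
  qed
  interpret I: subst Vs' Vs E' E "Inl l" "Inl ` Sset"
    using symE' symE irrE' irrE winE' winE pV' Sne SV' Vdef A1 A2 Ttree by unfold_locales
  have "is_tree Vs E \<longleftrightarrow> is_tree Vs' E'" by (rule I.tree_equiv)
  then have "is_tree Vs' E' \<longleftrightarrow> is_tree Vs E" by blast
  then show ?thesis
    unfolding ext_graph_is_tree_def Vs_def Vs'_def E_def E'_def U'_def .
qed


end
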